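(* Let $\tau_1>2$ and $\epsilon>0$. Let $\psi_1,\psi_2:\mathbb{N}\to(0,\infty)$ with $\psi_1$ decreasing, $\psi_2$ and $\psi_1-\psi_2$ decreasing, $\lambda(\psi_1)=\tau_1$ and $\lambda(\psi_2)=\tau_2$. Let $\theta\in[0,1)$ be either $0$ or an irrational number with Diophantine approximation exponent $\gamma$ (with $\gamma=1$ if $\theta=0$), and set $\beta_\epsilon:=\gamma^{-2}(\tau_1-1)^2-\epsilon$. Then there is $Q(\epsilon)$ (depending also on $\psi_1,\theta$) such that the following holds. Let $0<c<1$, $x\in\mathbb{R}$, and let $p_1,p_2,q_1,q_2$ be integers with $Q(\epsilon)<q_1<q_2<q_1^{\beta_\epsilon}$ and $q_2$ prime, such that \[\psi_1(q_i)-c\psi_2(q_i)\le\Big|x-\frac{p_i-\theta}{q_i}\Big|\le\psi_1(q_i)\qquad(i=1,2).\] Then there are no integers $p,q$ with $q_1<q<q_2$ such that $\big|x-\frac{p-\theta}{q}\big|<\psi_1(q)-c\psi_2(q)$.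
   Context: For $\psi:\mathbb{N}\to(0,\infty)$, $\lambda(\psi):=-\lim_{q\to\infty}\frac{\log\psi(q)}{\log q}$ (assumed to exist). The Diophantine approximation exponent of an irrational $\theta$ is the infimum of all $\gamma$ such that $|\theta-p/q|\le q^{-\gamma}$ has only finitely many integer solutions $(p,q)$. *)

theory Defs
  imports "HOL-Analysis.Analysis" "HOL-Computational_Algebra.Primes"
begin

definition has_lambda :: "(nat \<Rightarrow> real) \<Rightarrow> real \<Rightarrow> bool" where
  "has_lambda \<psi> \<tau> \<longleftrightarrow> ((\<lambda>q. - ln (\<psi> q) / ln (real q)) \<longlongrightarrow> \<tau>) sequentially"

text \<open>Diophantine approximation exponent (extended real; +infinity if no such gamma).\<close>
definition dioph_exp :: "real \<Rightarrow> ereal" where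
  "dioph_exp \<theta> = Inf {ereal g | g. finite {(p :: int, q :: int). q > 0 \<and>
        \<bar>\<theta> - real_of_int p / real_of_int q\<bar> \<le> real_of_int q powr (- g)}}"

end

theory Submission
  imports Defs
begin

lemma dioph_ge1: "dioph_exp \<theta> \<ge> 1"
  unfolding dioph_exp_def
proof (rule Inf_greatest)
  fix y assume "y \<in> {ereal g | g. finite {(p :: int, q :: int). q > 0 \<and>
        \<bar>\<theta> - real_of_int p / real_of_int q\<bar> \<le> real_of_int q powr (- g)}}"
  then obtain g where y: "y = ereal g" and fin: "finite {(p :: int, q :: int). q > 0 \<and>
        \<bar>\<theta> - real_of_int p / real_of_int q\<bar> \<le> real_of_int q powr (- g)}" by blast
  show "1 \<le> y"
  proof (rule ccontr)
    assume "\<not> 1 \<le> y"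
    hence g1: "g \<le> 1" using y by auto
    have sub: "(\<lambda>q::int. (\<lfloor>real_of_int q*\<theta>\<rfloor>, q)) ` {q::int. q > 0} \<subseteq> {(p :: int, q :: int). q > 0 \<and>
        \<bar>\<theta> - real_of_int p / real_of_int q\<bar> \<le> real_of_int q powr (- g)}"
    proof clarify
      fix q :: int assume q: "q > 0"
      have qr: "real_of_int q \<ge> 1" using q by simp
      have "\<bar>\<theta> - real_of_int \<lfloor>q*\<theta>\<rfloor> / q\<bar> = (q*\<theta> - \<lfloor>q*\<theta>\<rfloor>) / q"
        using q by (simp add: field_simps)
      also have "\<dots> \<le> 1 / q"
        using q by (intro divide_right_mono) linarith+
      also have "\<dots> = real_of_int q powr (-1)"
        using q by (simp add: powr_minus_divide)
      also have "\<dots> \<le> real_of_int q powr (-g)"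
        using qr g1 by (intro powr_mono) auto
      finally show "\<bar>\<theta> - real_of_int \<lfloor>real_of_int q * \<theta>\<rfloor> / real_of_int q\<bar> \<le> real_of_int q powr - g" .
    qed
    have "inj_on (\<lambda>q::int. (\<lfloor>real_of_int q*\<theta>\<rfloor>, q)) {q::int. q > 0}" by (auto simp: inj_on_def)
    moreover have "infinite {q::int. q > 0}"
      using infinite_Ioi[of "0::int"] by (simp add: greaterThan_def)
    ultimately have "infinite ((\<lambda>q::int. (\<lfloor>real_of_int q*\<theta>\<rfloor>, q)) ` {q::int. q > 0})"
      using finite_imageD by blast
    with sub fin show False using finite_subset by blast
  qed
qed


lemma sep_irr:
  fixes \<theta> \<gamma> G :: real
  assumes irr: "\<theta> \<notin> \<rat>" and ge: "ereal \<gamma> = dioph_exp \<theta>" and G: "\<gamma> < G"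
  shows "\<exists>C>0. C \<le> 1 \<and> (\<forall>(n::int) (m::int). m \<ge> 1 \<longrightarrow>
            \<bar>real_of_int n - \<theta> * m\<bar> \<ge> C * real_of_int m powr (1 - G))"
proof -
  have "dioph_exp \<theta> < ereal G" unfolding ge[symmetric] using G by simp
  then obtain y where "y \<in> {ereal g | g. finite {(p :: int, q :: int). q > 0 \<and>
        \<bar>\<theta> - real_of_int p / real_of_int q\<bar> \<le> real_of_int q powr (- g)}}" and "y < ereal G"
    unfolding dioph_exp_def by (auto simp: Inf_less_iff)
  then obtain g where gG: "g < G" and fin: "finite {(p :: int, q :: int). q > 0 \<and>
        \<bar>\<theta> - real_of_int p / real_of_int q\<bar> \<le> real_of_int q powr (- g)}" (is "finite ?F")
    by auto
  define f where "f = (\<lambda>(n::int,m::int). \<bar>m*\<theta> - n\<bar> * real_of_int m powr (G-1))"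
  define C where "C = Min (insert 1 (f ` ?F))"
  have pos: "f z > 0" if zF: "z \<in> ?F" for z
  proof -
    obtain n m where z: "z = (n,m)" and m: "m > 0" using zF by (cases z) auto
    have "m*\<theta> - n \<noteq> 0"
    proof
      assume "m*\<theta> - n = 0"
      hence "\<theta> = n / m" using m by (simp add: field_simps)
      hence "\<theta> \<in> \<rat>" by simp
      with irr show False by simp
    qed
    thus ?thesis using m by (simp add: f_def z)
  qed
  have finI: "finite (insert 1 (f ` ?F))" using fin by simp
  have Cpos: "C > 0" unfolding C_def using finI pos by (auto simp: Min_gr_iff)
  have C1: "C \<le> 1" unfolding C_def using finI by simp
  show ?thesis
  proof (intro exI[of _ C] conjI allI impI Cpos C1)
    fix n m :: int assume m: "m \<ge> 1"
    have mr: "real_of_int m \<ge> 1" using m by simp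
    have pp: "real_of_int m powr (G-1) * real_of_int m powr (1-G) = 1"
      using mr by (simp add: powr_add[symmetric])
    show "\<bar>real_of_int n - \<theta> * m\<bar> \<ge> C * real_of_int m powr (1 - G)"
    proof (cases "(n,m) \<in> ?F")
      case True
      hence "C \<le> f (n,m)" unfolding C_def using finI by simp
      hence "C * real_of_int m powr (1 - G) \<le> f (n,m) * real_of_int m powr (1 - G)"
        by (intro mult_right_mono) auto
      also have "\<dots> = \<bar>m*\<theta> - n\<bar>" using pp by (simp add: f_def mult.assoc)
      finally show ?thesis by (simp add: abs_minus_commute mult.commute)
    next
      case False
      hence lt: "\<bar>\<theta> - n / m\<bar> > real_of_int m powr (-g)" using m by auto
      have "real_of_int m powr (-G) \<le> real_of_int m powr (-g)"
        using mr gG by (intro powr_mono) auto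
      hence "m * real_of_int m powr (-G) < m * \<bar>\<theta> - n / m\<bar>" using lt mr by simp
      also have "m * \<bar>\<theta> - n / m\<bar> = \<bar>real_of_int n - \<theta> * m\<bar>"
        using mr by (simp add: abs_mult[symmetric] field_simps abs_minus_commute)
      also have "m * real_of_int m powr (-G) = real_of_int m powr (1 - G)"
        using mr by (simp add: powr_diff powr_minus_divide)
      finally have "real_of_int m powr (1 - G) < \<bar>real_of_int n - \<theta> * m\<bar>" .
      moreover have "C * real_of_int m powr (1 - G) \<le> real_of_int m powr (1 - G)"
        using C1 Cpos by (intro mult_left_le_one_le) auto
      ultimately show ?thesis by linarith
    qed
  qed
qed


lemma pair_ne:
  fixes \<theta> :: real and p p' :: int and q q' :: nat
  assumes irr: "\<theta> \<notin> \<rat>" and q: "1 \<le> q" "q < q'"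
  shows "(p-\<theta>)/q \<noteq> (p'-\<theta>)/q'"
proof
  assume "(p-\<theta>)/q = (p'-\<theta>)/q'"
  hence "(p-\<theta>)*q' = (p'-\<theta>)*q" using q by (simp add: field_simps)
  hence "\<theta> * (real q' - real q) = p*q' - p'*q" by (simp add: algebra_simps)
  hence "\<theta> = (p*q' - p'*q) / (real q' - real q)" using q by (simp add: field_simps)
  also have "\<dots> \<in> \<rat>" by (intro Rats_divide Rats_diff Rats_mult) auto
  finally show False using irr by simp
qed

lemma pair:
  fixes \<theta> C G :: real and p p' :: int and q q' :: nat
  assumes S: "\<forall>(n::int) (m::int). m \<ge> 1 \<longrightarrow> (real_of_int n - \<theta>*m \<noteq> 0 \<longrightarrow>
                 \<bar>real_of_int n - \<theta>*m\<bar> \<ge> C * real_of_int m powr (1-G))"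
    and C: "C > 0" and G: "G \<ge> 1" and q: "1 \<le> q" "q < q'"
    and ne: "(p-\<theta>)/q \<noteq> (p'-\<theta>)/q'"
  shows "ln \<bar>(p-\<theta>)/q - (p'-\<theta>)/q'\<bar> \<ge> ln C - G * ln q' - ln q"
proof -
  define n where "n = p*int q' - p'*int q"
  define m where "m = int q' - int q"
  have m1: "m \<ge> 1" using q by (simp add: m_def)
  have mq: "real_of_int m \<le> real q'" using q by (simp add: m_def)
  have eq: "(p-\<theta>)/q - (p'-\<theta>)/q' = (real_of_int n - \<theta>*m) / (real q * real q')"
    using q by (simp add: n_def m_def field_simps)
  have nz: "real_of_int n - \<theta>*m \<noteq> 0" using ne eq by auto
  have low: "\<bar>real_of_int n - \<theta>*m\<bar> \<ge> C * real_of_int m powr (1-G)" using S m1 nz by blast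
  have mr: "real_of_int m \<ge> 1" using m1 by simp
  have "ln (C * real_of_int m powr (1-G)) \<le> ln \<bar>real_of_int n - \<theta>*m\<bar>"
    using low C mr nz by (subst ln_le_cancel_iff) (auto intro: mult_pos_pos)
  moreover have "ln (C * real_of_int m powr (1-G)) = ln C + (1-G) * ln m"
    using C mr by (simp add: ln_mult ln_powr)
  moreover have "(1-G) * ln m \<ge> (1-G) * ln q'"
    using G mr mq by (intro mult_left_mono_neg) auto
  moreover have "ln \<bar>(p-\<theta>)/q - (p'-\<theta>)/q'\<bar> = ln \<bar>real_of_int n - \<theta>*m\<bar> - ln q - ln q'"
    using q nz unfolding eq by (simp add: abs_divide ln_div ln_mult)
  ultimately show ?thesis by (simp add: algebra_simps)
qed


lemma choose_delta:
  fixes \<tau>1 \<gamma> e :: real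
  assumes t: "\<tau>1 > 2" and g: "\<gamma> \<ge> 1" and e: "e < (\<tau>1-1)^2/\<gamma>^2"
  shows "\<exists>\<delta>>0. \<delta> < \<tau>1-2 \<and> e < (\<tau>1-1-\<delta>)^2/(\<gamma>+\<delta>)^2"
proof -
  have "((\<lambda>\<delta>. (\<tau>1-1-\<delta>)^2/(\<gamma>+\<delta>)^2) \<longlongrightarrow> (\<tau>1-1-0)^2/(\<gamma>+0)^2) (at_right 0)"
    using g by (intro tendsto_intros) auto
  hence lim: "((\<lambda>\<delta>. (\<tau>1-1-\<delta>)^2/(\<gamma>+\<delta>)^2) \<longlongrightarrow> (\<tau>1-1)^2/\<gamma>^2) (at_right 0)" by simp
  have ev1: "\<forall>\<^sub>F \<delta> in at_right 0. e < (\<tau>1-1-\<delta>)^2/(\<gamma>+\<delta>)^2"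
    using order_tendstoD(1)[OF lim e] .
  have ev2: "\<forall>\<^sub>F \<delta> in at_right (0::real). \<delta> \<in> {0<..<\<tau>1-2}"
    using t by (intro eventually_at_right_real) auto
  have "\<forall>\<^sub>F \<delta> in at_right (0::real). \<delta> \<in> {0<..<\<tau>1-2} \<and> e < (\<tau>1-1-\<delta>)^2/(\<gamma>+\<delta>)^2"
    using ev1 ev2 by eventually_elim auto
  from eventually_happens[OF this] obtain \<delta> where
    "\<delta> \<in> {0<..<\<tau>1-2} \<and> e < (\<tau>1-1-\<delta>)^2/(\<gamma>+\<delta>)^2"
    by (auto simp: trivial_limit_at_right_real)
  thus ?thesis by auto
qed

lemma psi_bound:
  fixes \<psi> :: "nat \<Rightarrow> real"
  assumes l: "has_lambda \<psi> \<tau>" and d: "\<delta> > 0" and pos: "\<And>q. \<psi> q > 0"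
  shows "\<exists>N0\<ge>2. \<forall>n\<ge>N0. ln (\<psi> n) \<le> -(\<tau>-\<delta>) * ln n"
proof -
  have "\<forall>\<^sub>F q in sequentially. \<tau> - \<delta> < - ln (\<psi> q) / ln (real q)"
    using l d unfolding has_lambda_def by (intro order_tendstoD(1)) auto
  then obtain N where N: "\<And>n. n \<ge> N \<Longrightarrow> \<tau> - \<delta> < - ln (\<psi> n) / ln (real n)"
    unfolding eventually_sequentially by blast
  show ?thesis
  proof (intro exI[of _ "max N 2"] conjI allI impI)
    fix n assume n: "max N 2 \<le> n"
    hence ln0: "ln (real n) > 0" by simp
    have "\<tau> - \<delta> < - ln (\<psi> n) / ln (real n)" using N n by simp
    hence "(\<tau> - \<delta>) * ln n < - ln (\<psi> n)" by (simp only: pos_less_divide_eq[OF ln0])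
    thus "ln (\<psi> n) \<le> -(\<tau>-\<delta>) * ln n" by (simp add: left_diff_distrib)
  qed simp
qed

lemma final_arith:
  fixes G a e c0 X Y Z :: real
  assumes G: "G \<ge> 1" and a: "a > 0" and D: "a^2 - G^2 * e > 0"
    and h1: "G*Y \<ge> c0 + a*X" and h2: "G*Z \<ge> c0 + a*Y" and h3: "Z < e*X"
    and hX: "X > (G+a)*(-c0)/(a^2 - G^2*e)"
  shows False
proof -
  have "G*(G*Z) \<ge> G*(c0 + a*Y)" using h2 G by (intro mult_left_mono) auto
  moreover have "a*(G*Y) \<ge> a*(c0 + a*X)" using h1 a by (intro mult_left_mono) auto
  moreover have "G^2 * Z < G^2 * (e*X)" using h3 G by (intro mult_strict_left_mono) auto
  moreover have "(G+a)*(-c0) < X*(a^2 - G^2*e)" using hX pos_divide_less_eq[OF D] by blast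
  ultimately show False by (simp add: algebra_simps power2_eq_square)
qed


lemma core:
  fixes \<theta> C G a e \<delta> \<tau>1 c x :: real and \<psi>1 \<psi>2 :: "nat \<Rightarrow> real"
    and p1 p2 p :: int and q1 q2 q N0 :: nat
  assumes S: "\<forall>(n::int) (m::int). m \<ge> 1 \<longrightarrow> (real_of_int n - \<theta>*m \<noteq> 0 \<longrightarrow>
                 \<bar>real_of_int n - \<theta>*m\<bar> \<ge> C * real_of_int m powr (1-G))"
    and C: "C > 0" and G: "G \<ge> 1" and adef: "a = \<tau>1 - 1 - \<delta>" and apos: "a > 0"
    and Dpos: "a^2 - G^2*e > 0"
    and N0: "\<forall>n\<ge>N0. ln (\<psi>1 n) \<le> -(\<tau>1-\<delta>) * ln n" and N02: "N0 \<ge> 2"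
    and th: "\<theta> = 0 \<or> \<theta> \<notin> \<rat>"
    and pos1: "\<And>q. \<psi>1 q > 0" and pos2: "\<forall>q. \<psi>2 q > 0"
    and anti1: "antimono \<psi>1" and anti2: "antimono (\<lambda>q. \<psi>1 q - \<psi>2 q)"
    and c: "0 < c" "c < 1"
    and q1N: "real N0 < real q1"
    and lnq1: "ln (real q1) > max (ln 2 / a) ((G+a)*(-(ln C - ln 2))/(a^2 - G^2*e))"
    and qq: "q1 < q" "q < q2" and q2e: "real q2 < real q1 powr e" and pr: "prime q2"
    and h1l: "\<psi>1 q1 - c * \<psi>2 q1 \<le> \<bar>x - (real_of_int p1 - \<theta>) / real q1\<bar>"
    and h1u: "\<bar>x - (real_of_int p1 - \<theta>) / real q1\<bar> \<le> \<psi>1 q1"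
    and h2u: "\<bar>x - (real_of_int p2 - \<theta>) / real q2\<bar> \<le> \<psi>1 q2"
    and hp: "\<bar>x - (real_of_int p - \<theta>) / real q\<bar> < \<psi>1 q - c * \<psi>2 q"
  shows False
proof -
  define A1 where "A1 = (real_of_int p1 - \<theta>) / real q1"
  define A where "A = (real_of_int p - \<theta>) / real q"
  define A2 where "A2 = (real_of_int p2 - \<theta>) / real q2"
  have q1ge: "q1 \<ge> N0" using q1N by simp
  have q11: "1 \<le> q1" using q1ge N02 by simp
  have qge: "q \<ge> N0" using q1ge qq by simp
  have mono1: "\<psi>1 q \<le> \<psi>1 q1" using antimonoD[OF anti1, of q1 q] qq by simp
  have mono2: "\<psi>1 q2 \<le> \<psi>1 q" using antimonoD[OF anti1, of q q2] qq by simp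
  have "\<psi>1 q - \<psi>2 q \<le> \<psi>1 q1 - \<psi>2 q1" using antimonoD[OF anti2, of q1 q] qq by simp
  hence m1: "c * (\<psi>1 q - \<psi>2 q) \<le> c * (\<psi>1 q1 - \<psi>2 q1)" using c by (intro mult_left_mono) auto
  have m2: "(1-c) * \<psi>1 q \<le> (1-c) * \<psi>1 q1" using c mono1 by (intro mult_left_mono) auto
  have monoc: "\<psi>1 q - c*\<psi>2 q \<le> \<psi>1 q1 - c*\<psi>2 q1"
    using m1 m2 by (simp add: algebra_simps)
  have "c * \<psi>2 q > 0" using c pos2 by simp
  hence hp': "\<bar>x - A\<bar> < \<psi>1 q" using hp by (simp add: A_def)
  have lq1: "ln (\<psi>1 q1) \<le> -(\<tau>1-\<delta>) * ln q1" using N0 q1ge by simp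
  have lq: "ln (\<psi>1 q) \<le> -(\<tau>1-\<delta>) * ln q" using N0 qge by simp
  have aq1: "a * ln q1 = (\<tau>1-\<delta>) * ln q1 - ln q1" "a * ln q = (\<tau>1-\<delta>) * ln q - ln q"
    by (simp_all add: adef algebra_simps)
  show False
  proof (cases "A = A1")
    case True
    thus False using h1l hp monoc by (simp add: A_def A1_def)
  next
    case ne1: False
    have P1: "ln \<bar>A1 - A\<bar> \<ge> ln C - G * ln q - ln q1"
      unfolding A1_def A_def using ne1 q11 qq by (intro pair[OF S C G]) (auto simp: A_def A1_def)
    have U1: "\<bar>A1 - A\<bar> \<le> 2 * \<psi>1 q1" using h1u hp' mono1 by (simp add: A1_def; linarith)
    have "ln \<bar>A1 - A\<bar> \<le> ln (2 * \<psi>1 q1)" using U1 ne1 pos1[of q1] by (subst ln_le_cancel_iff) auto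
    hence L1: "ln \<bar>A1 - A\<bar> \<le> ln 2 + ln (\<psi>1 q1)" using pos1[of q1] by (simp add: ln_mult)
    have E1: "G * ln q \<ge> (ln C - ln 2) + a * ln q1" using P1 L1 lq1 aq1 by linarith
    show False
    proof (cases "A = A2")
      case True
      have th0: "\<theta> = 0" using th pair_ne[of \<theta> q q2 p p2] True qq q11 by (auto simp: A_def A2_def)
      have "real_of_int p / q = real_of_int p2 / q2" using True th0 by (simp add: A_def A2_def)
      hence "real_of_int (p * int q2) = real_of_int (p2 * int q)" using qq q11 by (simp add: field_simps)
      hence eqi: "p * int q2 = p2 * int q" by (simp only: of_int_eq_iff)
      have pq2: "prime (int q2)" using pr by simp
      have "int q2 dvd p2 * int q" using eqi by (metis dvd_triv_right)
      moreover have "\<not> int q2 dvd int q"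
      proof
        assume "int q2 dvd int q"
        hence "q2 dvd q" by simp
        hence "q2 \<le> q" using qq q11 by (intro dvd_imp_le) auto
        thus False using qq by simp
      qed
      ultimately have "int q2 dvd p2" using pq2 prime_dvd_mult_iff by blast
      then obtain k where k: "p2 = int q2 * k" by (auto elim: dvdE)
      have "int q2 * p = int q2 * (k * int q)" using eqi k by (simp add: algebra_simps)
      hence pk: "p = k * int q" using qq by simp
      have Ak: "A = real_of_int k" using th0 pk qq q11 by (simp add: A_def)
      have "A1 - A = real_of_int (p1 - k * int q1) / q1" using th0 Ak q11 by (simp add: A1_def field_simps)
      moreover have "p1 - k * int q1 \<noteq> 0" using ne1 \<open>A1 - A = _\<close> by auto
      hence "\<bar>p1 - k * int q1\<bar> \<ge> 1" by linarith
      hence "\<bar>real_of_int (p1 - k * int q1)\<bar> \<ge> 1"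
        by (metis of_int_1_le_iff of_int_abs)
      hence "\<bar>real_of_int (p1 - k * int q1)\<bar> / q1 \<ge> 1 / q1" using q11 by (intro divide_right_mono) auto
      with \<open>A1 - A = _\<close> have "\<bar>A1 - A\<bar> \<ge> 1 / q1" by (simp add: abs_divide)
      hence "ln \<bar>A1 - A\<bar> \<ge> ln (1 / q1)" using q11 by (subst ln_le_cancel_iff) auto
      hence "- ln q1 \<le> ln 2 + ln (\<psi>1 q1)" using L1 q11 by (simp add: ln_div)
      hence "a * ln q1 \<le> ln 2" using lq1 aq1 by linarith
      hence "ln q1 \<le> ln 2 / a" using apos by (simp add: le_divide_eq mult.commute)
      thus False using lnq1 by simp
    next
      case ne2: False
      have P2: "ln \<bar>A - A2\<bar> \<ge> ln C - G * ln q2 - ln q"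
        unfolding A2_def A_def using ne2 q11 qq by (intro pair[OF S C G]) (auto simp: A_def A2_def)
      have U2: "\<bar>A - A2\<bar> \<le> 2 * \<psi>1 q" using h2u hp' mono2 by (simp add: A2_def; linarith)
      have "ln \<bar>A - A2\<bar> \<le> ln (2 * \<psi>1 q)" using U2 ne2 pos1[of q] by (subst ln_le_cancel_iff) auto
      hence L2: "ln \<bar>A - A2\<bar> \<le> ln 2 + ln (\<psi>1 q)" using pos1[of q] by (simp add: ln_mult)
      have E2: "G * ln q2 \<ge> (ln C - ln 2) + a * ln q" using P2 L2 lq aq1 by linarith
      have "ln (real q2) < ln (real q1 powr e)" using q2e qq q11 by (subst ln_less_cancel_iff) auto
      hence E3: "ln q2 < e * ln q1" using q11 by (simp add: ln_powr)
      show False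
        using final_arith[OF G apos Dpos E1 E2 E3] lnq1 by simp
    qed
  qed
qed

theorem lemma3:
  fixes \<tau>1 \<epsilon> \<theta> \<gamma> :: real and \<psi>1 :: "nat \<Rightarrow> real"
  assumes "\<tau>1 > 2" and "\<epsilon> > 0"
    and "\<And>q. \<psi>1 q > 0"
    and "antimono \<psi>1"
    and "has_lambda \<psi>1 \<tau>1"
    and "0 \<le> \<theta>" and "\<theta> < 1"
    and "(\<theta> = 0 \<and> \<gamma> = 1) \<or> (\<theta> \<notin> \<rat> \<and> ereal \<gamma> = dioph_exp \<theta>)"
  shows "\<exists>Q::real. \<forall>(\<psi>2 :: nat \<Rightarrow> real) (\<tau>2::real) (c::real) (x::real)
            (p1::int) (p2::int) (q1::nat) (q2::nat).
     (\<forall>q. \<psi>2 q > 0) \<and> antimono \<psi>2 \<and> antimono (\<lambda>q. \<psi>1 q - \<psi>2 q) \<and>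
     has_lambda \<psi>2 \<tau>2 \<and> 0 < c \<and> c < 1 \<and>
     Q < real q1 \<and> q1 < q2 \<and>
     real q2 < real q1 powr ((\<tau>1 - 1)^2 / \<gamma>^2 - \<epsilon>) \<and> prime q2 \<and>
     \<psi>1 q1 - c * \<psi>2 q1 \<le> \<bar>x - (real_of_int p1 - \<theta>) / real q1\<bar> \<and>
     \<bar>x - (real_of_int p1 - \<theta>) / real q1\<bar> \<le> \<psi>1 q1 \<and>
     \<psi>1 q2 - c * \<psi>2 q2 \<le> \<bar>x - (real_of_int p2 - \<theta>) / real q2\<bar> \<and>
     \<bar>x - (real_of_int p2 - \<theta>) / real q2\<bar> \<le> \<psi>1 q2
     \<longrightarrow> \<not> (\<exists>(p::int) (q::nat). q1 < q \<and> q < q2 \<and>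
            \<bar>x - (real_of_int p - \<theta>) / real q\<bar> < \<psi>1 q - c * \<psi>2 q)"
proof -
  note th8 = assms(8)
  have g1: "\<gamma> \<ge> 1"
  proof (cases "\<theta> = 0 \<and> \<gamma> = 1")
    case True thus ?thesis by simp
  next
    case False
    hence "ereal \<gamma> = dioph_exp \<theta>" using th8 by blast
    hence "1 \<le> ereal \<gamma>" using dioph_ge1[of \<theta>] by simp
    thus ?thesis by simp
  qed
  define e where "e = (\<tau>1-1)^2/\<gamma>^2 - \<epsilon>"
  have "e < (\<tau>1-1)^2/\<gamma>^2" using assms(2) by (simp add: e_def)
  then obtain \<delta> where d: "\<delta> > 0" "\<delta> < \<tau>1 - 2" "e < (\<tau>1-1-\<delta>)^2/(\<gamma>+\<delta>)^2"
    using choose_delta[OF assms(1) g1] by blast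
  define G where "G = \<gamma> + \<delta>"
  define a where "a = \<tau>1 - 1 - \<delta>"
  have G1: "G \<ge> 1" using g1 d by (simp add: G_def)
  have apos: "a > 0" using d by (simp add: a_def)
  have "e < a^2/G^2" using d by (simp add: a_def G_def)
  hence "e * G^2 < a^2" using G1 by (simp add: less_divide_eq)
  hence Dpos: "a^2 - G^2*e > 0" by (simp add: mult.commute)
  obtain C where C: "C > 0" and S: "\<forall>(n::int) (m::int). m \<ge> 1 \<longrightarrow> (real_of_int n - \<theta>*m \<noteq> 0 \<longrightarrow>
                 \<bar>real_of_int n - \<theta>*m\<bar> \<ge> C * real_of_int m powr (1-G))"
  proof (cases "\<theta> = 0")
    case True
    show ?thesis
    proof (rule that[of 1], simp, intro allI impI)
      fix n m :: int assume m: "m \<ge> 1" and nz: "real_of_int n - \<theta>*m \<noteq> 0"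
      have "n \<noteq> 0" using nz True by simp
      hence "\<bar>n\<bar> \<ge> 1" by linarith
      hence n1: "\<bar>real_of_int n\<bar> \<ge> 1" by (metis of_int_1_le_iff of_int_abs)
      have "real_of_int m powr (1-G) \<le> real_of_int m powr 0"
        using m G1 by (intro powr_mono) auto
      also have "\<dots> = 1" using m by simp
      finally show "\<bar>real_of_int n - \<theta>*m\<bar> \<ge> 1 * real_of_int m powr (1-G)" using n1 True by simp
    qed
  next
    case False
    hence irr: "\<theta> \<notin> \<rat>" and ge: "ereal \<gamma> = dioph_exp \<theta>" using th8 by auto
    obtain C where "C > 0" "\<forall>(n::int) (m::int). m \<ge> 1 \<longrightarrow>
            \<bar>real_of_int n - \<theta> * m\<bar> \<ge> C * real_of_int m powr (1 - G)"
      using sep_irr[OF irr ge, of G] d by (auto simp: G_def)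
    thus ?thesis using that by blast
  qed
  have th: "\<theta> = 0 \<or> \<theta> \<notin> \<rat>" using th8 by blast
  obtain N0 where N0: "N0 \<ge> 2" "\<forall>n\<ge>N0. ln (\<psi>1 n) \<le> -(\<tau>1-\<delta>) * ln n"
    using psi_bound[OF assms(5) d(1) assms(3)] by blast
  define B where "B = max (ln 2 / a) ((G+a)*(-(ln C - ln 2))/(a^2 - G^2*e))"
  show ?thesis
  proof (intro exI[of _ "max (real N0) (exp B)"] allI impI notI)
    fix \<psi>2 :: "nat \<Rightarrow> real" and \<tau>2 c x :: real and p1 p2 :: int and q1 q2 :: nat
    assume H: "(\<forall>q. \<psi>2 q > 0) \<and> antimono \<psi>2 \<and> antimono (\<lambda>q. \<psi>1 q - \<psi>2 q) \<and>
     has_lambda \<psi>2 \<tau>2 \<and> 0 < c \<and> c < 1 \<and>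
     max (real N0) (exp B) < real q1 \<and> q1 < q2 \<and>
     real q2 < real q1 powr ((\<tau>1 - 1)^2 / \<gamma>^2 - \<epsilon>) \<and> prime q2 \<and>
     \<psi>1 q1 - c * \<psi>2 q1 \<le> \<bar>x - (real_of_int p1 - \<theta>) / real q1\<bar> \<and>
     \<bar>x - (real_of_int p1 - \<theta>) / real q1\<bar> \<le> \<psi>1 q1 \<and>
     \<psi>1 q2 - c * \<psi>2 q2 \<le> \<bar>x - (real_of_int p2 - \<theta>) / real q2\<bar> \<and>
     \<bar>x - (real_of_int p2 - \<theta>) / real q2\<bar> \<le> \<psi>1 q2"
    assume "\<exists>(p::int) (q::nat). q1 < q \<and> q < q2 \<and>
            \<bar>x - (real_of_int p - \<theta>) / real q\<bar> < \<psi>1 q - c * \<psi>2 q"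
    then obtain p q where pq: "q1 < q" "q < q2"
      "\<bar>x - (real_of_int p - \<theta>) / real q\<bar> < \<psi>1 q - c * \<psi>2 q" by blast
    have q1pos: "real q1 > 0" using H N0 by auto
    have "exp B < real q1" using H by simp
    hence lnq1: "ln (real q1) > B" using q1pos by (metis exp_less_cancel_iff exp_ln)
    show False
      using core[where ?\<psi>2.0=\<psi>2 and c=c and x=x and ?p1.0=p1 and ?p2.0=p2 and p=p and ?q1.0=q1 and ?q2.0=q2 and q=q,
         OF S C G1 a_def apos Dpos N0(2) N0(1) th assms(3)]
      using H pq lnq1 assms(4) by (auto simp: B_def e_def)
  qed
qed

end
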